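(* For $1\le i\le r$, $C_{i,r}(a)=G_{i,r-i+2}(a)$ as polynomials in $a$.
   Context: Bernoulli polynomials $B_n(a)$: $\sum_{n\ge0}B_n(a)x^n/n!=xe^{ax}/(e^x-1)$. For $1\le i\le r$, let $S_{i,r}$ be the set of $(n_1,\dots,n_r)\in\mathbb Z_{\ge0}^r$ with $n_1+\dots+n_r=r$, $n_1+\dots+n_j<j$ ($1\le j<i$), and $n_{j+1}+\dots+n_r\le r-j$ ($i\le j<r$), and $C_{i,r}(a)=(-1)^r\sum_{(n_1,\dots,n_r)\in S_{i,r}}\prod_{j=1}^r\frac{B_{n_j}(a)}{n_j!}$. Let $L(a,t)=\sum_{n\ge1}\lambda_n(a)t^n\in\mathbb Q[a][[t]]$ be the compositional inverse (in $t$) of $e^{-at}(e^t-1)$, equivalently the unique such series with $e^{L(a,t)}(1-te^{(a-1)L(a,t)})=1$. The generalized Gregory polynomials $G_{m,n}(a)$ are defined by \[ \sum_{m,n\ge0}G_{m,n}(a)x^my^n=\frac{yL(a,-x)^2-xL(a,-y)^2}{-L(a,-x)+L(a,-y)}. \] *)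

theory Defs
  imports "HOL-Computational_Algebra.Computational_Algebra"
begin

text \<open>All objects live in Q[a] = rat poly (the variable a is the polynomial variable).\<close>

definition pa :: "rat poly" where "pa = [:0, 1:]"

definition expc :: "rat poly \<Rightarrow> rat poly fps" where
  "expc c = Abs_fps (\<lambda>n. smult (1 / fact n) (c ^ n))"

definition bern_egf :: "rat poly fps" where
  "bern_egf = (THE f. (expc 1 - 1) * f = fps_X * expc pa)"

definition bernpoly :: "nat \<Rightarrow> rat poly" where
  "bernpoly n = of_nat (fact n) * (bern_egf $ n)"

definition S_set :: "nat \<Rightarrow> nat \<Rightarrow> nat list set" where
  "S_set i r = {ns. length ns = r \<and> sum_list ns = r
      \<and> (\<forall>j. 1 \<le> j \<and> j < i \<longrightarrow> sum_list (take j ns) < j)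
      \<and> (\<forall>j. i \<le> j \<and> j < r \<longrightarrow> sum_list (drop j ns) \<le> r - j)}"

definition C_poly :: "nat \<Rightarrow> nat \<Rightarrow> rat poly" where
  "C_poly i r = (-1) ^ r *
     (\<Sum>ns\<in>S_set i r. \<Prod>n\<leftarrow>ns. smult (1 / fact n) (bernpoly n))"

definition F_ser :: "rat poly fps" where
  "F_ser = expc (- pa) * (expc 1 - 1)"

definition L_ser :: "rat poly fps" where
  "L_ser = (THE L. L $ 0 = 0 \<and> F_ser oo L = fps_X \<and> L oo F_ser = fps_X)"

text \<open>Bivariate series in x,y over Q[a]: element H of type rat poly fps fps,
  H $ m $ n is the coefficient of x^m y^n.\<close>
definition Lmx :: "rat poly fps fps" where
  "Lmx = Abs_fps (\<lambda>m. fps_const ((-1) ^ m * (L_ser $ m)))"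

definition Lmy :: "rat poly fps fps" where
  "Lmy = fps_const (Abs_fps (\<lambda>n. (-1) ^ n * (L_ser $ n)))"

definition xv :: "rat poly fps fps" where "xv = fps_X"
definition yv :: "rat poly fps fps" where "yv = fps_const fps_X"

definition G_gen :: "rat poly fps fps" where
  "G_gen = (THE H. H * (- Lmx + Lmy) = yv * Lmx ^ 2 - xv * Lmy ^ 2)"

definition G_poly :: "nat \<Rightarrow> nat \<Rightarrow> rat poly" where
  "G_poly m n = G_gen $ m $ n"

end

theory Submission
  imports Defs
begin

lemma expc_nth: "expc c $ n = smult (1 / fact n) (c ^ n)"
  by (simp add: expc_def)

lemma smult_sum_right: "smult c (sum f A) = (\<Sum>x\<in>A. smult c (f x))"
  by (induct A rule: infinite_finite_induct) (simp_all add: smult_add_right)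

lemma expc_mult: "expc c * expc d = expc (c + d)"
proof (rule fps_ext)
  fix n
  have "(expc c * expc d) $ n = (\<Sum>k\<le>n. smult (1/fact k) (c^k) * smult (1/fact (n-k)) (d^(n-k)))"
    by (simp add: fps_mult_nth expc_nth atLeast0AtMost)
  also have "\<dots> = (\<Sum>k\<le>n. smult (1/fact n) (of_nat (n choose k) * c^k * d^(n-k)))"
  proof (rule sum.cong[OF refl])
    fix k assume k: "k \<in> {..n}"
    hence "(1/fact k) * (1/fact (n-k)) = (1/fact n) * (of_nat (n choose k) :: rat)"
      by (simp add: binomial_fact field_simps)
    thus "smult (1/fact k) (c^k) * smult (1/fact (n-k)) (d^(n-k)) = smult (1/fact n) (of_nat (n choose k) * c^k * d^(n-k))"
      by (simp add: of_nat_poly smult_smult mult_ac)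
  qed
  also have "\<dots> = smult (1/fact n) ((c+d)^n)"
    by (simp add: binomial_ring smult_sum_right mult_ac)
  finally show "(expc c * expc d) $ n = expc (c+d) $ n" by (simp add: expc_nth)
qed

lemma expc_0: "expc 0 = 1"
  by (rule fps_ext) (simp add: expc_nth)

definition Qs :: "rat poly fps" where "Qs = Abs_fps (\<lambda>n. smult (1/fact (Suc n)) 1)"

lemma E1_eq: "expc 1 - 1 = fps_X * Qs"
  by (rule fps_ext) (case_tac n, simp_all add: expc_nth Qs_def)

lemma E1_nz: "expc 1 - 1 \<noteq> (0::rat poly fps)"
proof
  assume "expc 1 - 1 = (0::rat poly fps)"
  hence "(expc 1 - 1 :: rat poly fps) $ 1 = 0" by simp
  thus False by (simp add: expc_nth)
qed

lemma bern_prop: "(expc 1 - 1) * bern_egf = fps_X * expc pa"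
proof -
  let ?Qi = "fps_right_inverse Qs 1"
  have QQ: "Qs * ?Qi = 1" by (rule fps_right_inverse) (simp add: Qs_def)
  have ex: "(expc 1 - 1) * (?Qi * expc pa) = fps_X * expc pa"
  proof -
    have "(expc 1 - 1) * (?Qi * expc pa) = fps_X * ((Qs * ?Qi) * expc pa)"
      unfolding E1_eq by (simp only: mult.assoc)
    thus ?thesis by (simp add: QQ)
  qed
  have "\<exists>!f. (expc 1 - 1) * f = fps_X * expc pa"
  proof
    show "(expc 1 - 1) * (?Qi * expc pa) = fps_X * expc pa" by (rule ex)
  next
    fix f assume "(expc 1 - 1) * f = fps_X * expc pa"
    with ex have "(expc 1 - 1) * f = (expc 1 - 1) * (?Qi * expc pa)" by metis
    thus "f = ?Qi * expc pa" using E1_nz by (metis mult_left_cancel)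
  qed
  thus ?thesis unfolding bern_egf_def by (rule theI')
qed

lemma bern0: "bern_egf $ 0 = 1"
proof -
  have "((expc 1 - 1) * bern_egf) $ 1 = (fps_X * expc pa) $ 1" by (simp add: bern_prop)
  thus ?thesis by (simp add: fps_mult_nth expc_nth flip: one_pCons)
qed

lemma expc_inv: "expc (- pa) * expc pa = 1"
  by (simp add: expc_mult expc_0)

lemma F_b: "F_ser * bern_egf = fps_X"
proof -
  have "F_ser * bern_egf = expc (- pa) * ((expc 1 - 1) * bern_egf)" by (simp add: F_ser_def mult.assoc)
  also have "\<dots> = expc (- pa) * (fps_X * expc pa)" by (simp only: bern_prop)
  also have "\<dots> = fps_X * (expc (- pa) * expc pa)" by (metis mult.assoc mult.commute)
  finally show ?thesis by (simp add: expc_inv)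
qed

lemma F0: "F_ser $ 0 = 0" by (simp add: F_ser_def expc_nth)
lemma F1: "F_ser $ 1 = 1" by (simp add: F_ser_def expc_nth fps_mult_nth flip: one_pCons)

fun ci :: "'a::idom fps \<Rightarrow> nat \<Rightarrow> 'a" where
  "ci a 0 = 0"
| "ci a (Suc n) = fps_X $ Suc n - (\<Sum>i\<in>{0..n}. ci a i * (a^i) $ Suc n)"

definition finv :: "'a::idom fps \<Rightarrow> 'a fps" where "finv a = Abs_fps (ci a)"

lemma finv_left:
  assumes a0: "a$0 = 0" and a1: "a$1 = 1"
  shows "finv a oo a = fps_X"
proof -
  let ?i = "finv a oo a"
  have "?i $n = fps_X$n" for n
  proof (cases n)
    case 0
    then show ?thesis using a0 by (simp add: fps_compose_nth finv_def)
  next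
    case (Suc n1)
    have "?i $ n = sum (\<lambda>i. (finv a $ i) * (a^i)$n) {0 .. n1} + finv a $ Suc n1 * (a $ 1)^ Suc n1"
      by (simp only: fps_compose_nth) (simp add: Suc startsby_zero_power_nth_same [OF a0] del: power_Suc)
    also have "\<dots> = sum (\<lambda>i. (finv a $ i) * (a^i)$n) {0 .. n1} +
        (fps_X$ Suc n1 - sum (\<lambda>i. (finv a $ i) * (a^i)$n) {0 .. n1})"
      using a0 a1 Suc by (simp add: finv_def)
    also have "\<dots> = fps_X$n" using Suc by simp
    finally show ?thesis .
  qed
  then show ?thesis by (simp add: fps_eq_iff)
qed

lemma finv_right:
  assumes a0: "a$0 = 0" and a1: "a$1 = (1::'a::idom)"
  shows "a oo finv a = fps_X"
proof -
  have th0: "finv a $ 0 = 0" by (simp add: finv_def)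
  from finv_left[OF a0 a1] have "a oo (finv a oo a) = a oo fps_X" by simp
  then have "(a oo finv a) oo a = fps_X oo a"
    by (simp add: fps_compose_assoc[OF a0 th0] fps_X_fps_compose_startby0[OF a0])
  with fps_compose_inj_right[OF a0] a1 show ?thesis by simp
qed

lemma L_props: "L_ser $ 0 = 0 \<and> F_ser oo L_ser = fps_X \<and> L_ser oo F_ser = fps_X"
proof -
  have "\<exists>!L. L $ 0 = 0 \<and> F_ser oo L = fps_X \<and> L oo F_ser = fps_X"
  proof
    show "finv F_ser $ 0 = 0 \<and> F_ser oo finv F_ser = fps_X \<and> finv F_ser oo F_ser = fps_X"
      using finv_left[OF F0 F1] finv_right[OF F0 F1] by (simp add: finv_def)
  next
    fix L assume L: "L $ 0 = 0 \<and> F_ser oo L = fps_X \<and> L oo F_ser = fps_X"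
    have "L = L oo (F_ser oo finv F_ser)" using finv_right[OF F0 F1] by simp
    also have "\<dots> = (L oo F_ser) oo finv F_ser"
      by (rule fps_compose_assoc) (simp_all add: finv_def F0)
    also have "\<dots> = finv F_ser" using L by (simp add: finv_def)
    finally show "L = finv F_ser" .
  qed
  thus ?thesis unfolding L_ser_def by (rule theI')
qed

lemma L0: "L_ser $ 0 = 0" using L_props by blast
lemma FL: "F_ser oo L_ser = fps_X" using L_props by blast

lemma XbL: "fps_X * (bern_egf oo L_ser) = L_ser"
proof -
  have "(F_ser * bern_egf) oo L_ser = fps_X oo L_ser" by (simp add: F_b)
  thus ?thesis by (simp add: fps_compose_mult_distrib[OF L0] FL L0)
qed

lemma L1: "L_ser $ 1 = 1"
proof -
  have "(F_ser oo L_ser) $ 1 = 1" by (simp add: FL)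
  thus ?thesis using F1 by (simp add: fps_compose_nth F0)
qed

lemma Lpow_zero: "k < i \<Longrightarrow> (L_ser ^ i) $ k = 0"
  using startsby_zero_power_prefix[OF L0] by blast

lemma Lpow_rec:
  assumes "h \<ge> 1"
  shows "(L_ser^h) $ Suc k = (\<Sum>c\<le>Suc k. bern_egf$c * (L_ser^(h+c-1)) $ k)"
proof -
  obtain m where h: "h = Suc m" using assms by (cases h) auto
  define g where "g i = (fps_X^m * bern_egf) $ i * (L_ser^i) $ k" for i
  have pm: "fps_X^m oo L_ser = L_ser^m"
    by (simp add: fps_compose_power[OF L0, symmetric] L0)
  have "L_ser^h = (fps_X * (bern_egf oo L_ser)) * (fps_X^m oo L_ser)" by (simp only: h XbL pm power_Suc)
  also have "\<dots> = fps_X * ((bern_egf oo L_ser) * (fps_X^m oo L_ser))"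
    by (simp only: mult.assoc)
  also have "\<dots> = fps_X * ((fps_X^m * bern_egf) oo L_ser)"
    by (simp add: fps_compose_mult_distrib[OF L0] mult.commute)
  finally have "(L_ser^h) $ Suc k = ((fps_X^m * bern_egf) oo L_ser) $ k" by simp
  also have "\<dots> = (\<Sum>i=0..k. g i)" by (simp add: fps_compose_nth g_def)
  also have "\<dots> = (\<Sum>i=0..<m + (k+2). g i)"
    by (rule sum.mono_neutral_left) (auto simp: g_def Lpow_zero)
  also have "\<dots> = (\<Sum>i=0..<m. g i) + (\<Sum>i=m..<m + (k+2). g i)"
    by (simp add: sum.atLeastLessThan_concat)
  also have "(\<Sum>i=0..<m. g i) = 0" by (simp add: g_def fps_X_power_mult_nth)
  also have "(\<Sum>i=m..<m + (k+2). g i) = (\<Sum>i=0+m..<(k+2)+m. g i)" by (simp add: add.commute)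
  also have "\<dots> = (\<Sum>c=0..<k+2. g (c+m))" by (rule sum.shift_bounds_nat_ivl)
  also have "\<dots> = (\<Sum>c\<le>Suc k. bern_egf$c * (L_ser^(h+c-1)) $ k)"
    by (rule sum.cong) (auto simp: g_def fps_X_power_mult_nth h add.commute)
  finally show ?thesis by simp
qed

definition prodb :: "nat list \<Rightarrow> rat poly" where
  "prodb ns = (\<Prod>n\<leftarrow>ns. bern_egf $ n)"

lemma prodb_Cons[simp]: "prodb (c # xs) = bern_egf $ c * prodb xs"
  by (simp add: prodb_def)
lemma prodb_Nil[simp]: "prodb [] = 1"
  by (simp add: prodb_def)
lemma prodb_append[simp]: "prodb (xs @ ys) = prodb xs * prodb ys"
  by (simp add: prodb_def)
lemma prodb_rev[simp]: "prodb (rev xs) = prodb xs"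
  by (simp add: prodb_def flip: rev_map)

lemma sum_lists_split:
  fixes A :: "nat list set" and N :: nat
  assumes fin: "finite A" and ne: "\<And>xs. xs \<in> A \<Longrightarrow> xs \<noteq> [] \<and> hd xs \<le> N"
  shows "sum f A = (\<Sum>c\<le>N. \<Sum>xs\<in>{xs. c#xs \<in> A}. f (c#xs))"
proof -
  have fib: "finite {xs. c#xs \<in> A}" for c
  proof -
    have "{xs. c#xs \<in> A} \<subseteq> tl ` A" by (force simp: image_iff)
    thus ?thesis using fin finite_surj by blast
  qed
  have "sum f A = (\<Sum>(c,xs)\<in>Sigma {..N} (\<lambda>c. {xs. c#xs \<in> A}). f (c#xs))"
  proof (rule sum.reindex_bij_witness[where i="\<lambda>(c,xs). c#xs" and j="\<lambda>ys. (hd ys, tl ys)"])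
    fix ys assume "ys \<in> A"
    with ne[OF this] show "(\<lambda>(c,xs). c#xs) (hd ys, tl ys) = ys" by simp
    from ne[OF \<open>ys \<in> A\<close>] \<open>ys \<in> A\<close> show "(hd ys, tl ys) \<in> Sigma {..N} (\<lambda>c. {xs. c#xs \<in> A})" by (cases ys) auto
    show "(case (hd ys, tl ys) of (c, xs) \<Rightarrow> f (c # xs)) = f ys" using ne[OF \<open>ys \<in> A\<close>] by (cases ys) auto
  qed auto
  also have "\<dots> = (\<Sum>c\<le>N. \<Sum>xs\<in>{xs. c#xs \<in> A}. f (c#xs))"
    by (rule sum.Sigma[symmetric]) (simp_all add: fib)
  finally show ?thesis .
qed

lemma finite_bounded_lists: "finite {ns :: nat list. length ns = k \<and> sum_list ns \<le> B}"
proof -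
  have "{ns :: nat list. length ns = k \<and> sum_list ns \<le> B} \<subseteq> {xs. set xs \<subseteq> {..B} \<and> length xs = k}"
    using member_le_sum_list by fastforce
  thus ?thesis by (rule finite_subset) (rule finite_lists_length_eq, simp)
qed

definition FP :: "nat \<Rightarrow> nat \<Rightarrow> nat list set" where
  "FP h k = {ns. length ns = k \<and> sum_list ns + h = k \<and> (\<forall>j<k. j < sum_list (take j ns) + h)}"

definition NN :: "nat \<Rightarrow> nat \<Rightarrow> nat list set" where
  "NN s l = {ns. length ns = l \<and> sum_list ns + s = l \<and> (\<forall>m\<le>l. m \<le> sum_list (take m ns) + s)}"

lemma finite_FP: "finite (FP h k)"
  by (rule finite_subset[OF _ finite_bounded_lists[of k k]]) (auto simp: FP_def)

lemma finite_NN: "finite (NN s l)"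
  by (rule finite_subset[OF _ finite_bounded_lists[of l l]]) (auto simp: NN_def)

lemma All_le_Suc: "(\<forall>m\<le>Suc l. P m) \<longleftrightarrow> P 0 \<and> (\<forall>m\<le>l. P (Suc m))"
  by (metis Suc_le_mono le0 not0_implies_Suc)

lemma FP_0: "FP h 0 = (if h = 0 then {[]} else {})"
  by (auto simp: FP_def)

lemma FP_Suc_0: "FP 0 (Suc k) = {}"
  by (auto simp: FP_def)

lemma FP_fiber:
  assumes "h \<ge> 1"
  shows "{xs. c#xs \<in> FP h (Suc k)} = FP (h+c-1) k"
  using assms by (auto simp: FP_def All_less_Suc2)

lemma NN_0: "NN s 0 = (if s = 0 then {[]} else {})"
  by (auto simp: NN_def)

lemma NN_fiber:
  "{xs. c#xs \<in> NN s (Suc l)} = (if s + c \<ge> 1 then NN (s+c-1) l else {})"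
  by (auto simp: NN_def All_le_Suc)

lemma FP_sum: "(\<Sum>ns\<in>FP h k. prodb ns) = (L_ser^h) $ k"
proof (induction k arbitrary: h)
  case 0
  show ?case by (simp add: FP_0 L0)
next
  case (Suc k)
  show ?case
  proof (cases "h = 0")
    case True
    thus ?thesis by (simp add: FP_Suc_0)
  next
    case False
    hence h1: "h \<ge> 1" by simp
    have hd: "ns \<noteq> [] \<and> hd ns \<le> Suc k" if "ns \<in> FP h (Suc k)" for ns
    proof -
      from that have "length ns = Suc k" "sum_list ns \<le> Suc k" by (auto simp: FP_def)
      thus ?thesis by (cases ns) auto
    qed
    have "(\<Sum>ns\<in>FP h (Suc k). prodb ns) = (\<Sum>c\<le>Suc k. \<Sum>xs\<in>FP (h+c-1) k. prodb (c#xs))"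
      by (simp add: sum_lists_split[OF finite_FP hd] FP_fiber[OF h1])
    also have "\<dots> = (\<Sum>c\<le>Suc k. bern_egf $ c * (L_ser^(h+c-1)) $ k)"
      by (simp add: sum_distrib_left[symmetric] Suc.IH)
    also have "\<dots> = (L_ser^h) $ Suc k" by (rule Lpow_rec[OF h1, symmetric])
    finally show ?thesis .
  qed
qed

lemma NN_sum: "(\<Sum>ns\<in>NN s l. prodb ns) = (L_ser^(s+1)) $ (l+1)"
proof (induction l arbitrary: s)
  case 0
  show ?case
  proof (cases "s = 0")
    case True thus ?thesis using L1 by (simp add: NN_0)
  next
    case False thus ?thesis using Lpow_zero[of 1 "s+1"] by (simp add: NN_0 del: power_Suc)
  qed
next
  case (Suc l)
  have hd: "ns \<noteq> [] \<and> hd ns \<le> Suc (Suc l)" if "ns \<in> NN s (Suc l)" for ns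
  proof -
    from that have "length ns = Suc l" "sum_list ns \<le> Suc l" by (auto simp: NN_def)
    thus ?thesis by (cases ns) auto
  qed
  have "(\<Sum>ns\<in>NN s (Suc l). prodb ns) = (\<Sum>c\<le>Suc (Suc l). \<Sum>xs\<in>(if s + c \<ge> 1 then NN (s+c-1) l else {}). prodb (c#xs))"
    by (simp add: sum_lists_split[OF finite_NN hd] NN_fiber)
  also have "\<dots> = (\<Sum>c\<le>Suc (Suc l). bern_egf $ c * (L_ser^(s+1+c-1)) $ Suc l)"
  proof (rule sum.cong[OF refl])
    fix c
    show "(\<Sum>xs\<in>(if s + c \<ge> 1 then NN (s+c-1) l else {}). prodb (c#xs)) = bern_egf $ c * (L_ser^(s+1+c-1)) $ Suc l"
    proof (cases "s + c \<ge> 1")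
      case True
      hence "s + c - 1 + 1 = s + 1 + c - 1" by simp
      thus ?thesis using True by (simp add: sum_distrib_left[symmetric] Suc.IH)
    next
      case False
      hence "s = 0" "c = 0" by auto
      thus ?thesis by simp
    qed
  qed
  also have "\<dots> = (L_ser^(s+1)) $ Suc (Suc l)" by (rule Lpow_rec[symmetric]) simp
  finally show ?case by simp
qed

lemma sum_take_drop: "sum_list (take m xs) + sum_list (drop m xs) = sum_list (xs :: nat list)"
  by (metis append_take_drop_id sum_list_append)

definition RFP :: "nat \<Rightarrow> nat \<Rightarrow> nat list set" where
  "RFP h k = {ns. length ns = k \<and> sum_list ns + h = k \<and> (\<forall>j. 1 \<le> j \<and> j \<le> k \<longrightarrow> sum_list (take j ns) < j)}"

lemma rev_cond:
  assumes len: "length xs = k" and sm: "sum_list xs + h = (k::nat)"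
  shows "(\<forall>j<k. j < sum_list (take j xs) + h) \<longleftrightarrow> (\<forall>j. 1 \<le> j \<and> j \<le> k \<longrightarrow> sum_list (take j (rev xs)) < j)"
proof
  assume A: "\<forall>j<k. j < sum_list (take j xs) + h"
  show "\<forall>j. 1 \<le> j \<and> j \<le> k \<longrightarrow> sum_list (take j (rev xs)) < j"
  proof (intro allI impI)
    fix j assume j: "1 \<le> j \<and> j \<le> k"
    define m where "m = k - j"
    have m: "m < k" "j = k - m" using j by (auto simp: m_def)
    have e: "sum_list (take j (rev xs)) = sum_list (drop m xs)"
      using len m by (simp add: take_rev)
    have "sum_list (take m xs) + sum_list (drop m xs) + h = k" using sm sum_take_drop[of m xs] by simp
    moreover have "m < sum_list (take m xs) + h" using A m by blast
    ultimately show "sum_list (take j (rev xs)) < j" using e m by linarith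
  qed
next
  assume B: "\<forall>j. 1 \<le> j \<and> j \<le> k \<longrightarrow> sum_list (take j (rev xs)) < j"
  show "\<forall>j<k. j < sum_list (take j xs) + h"
  proof (intro allI impI)
    fix m assume m: "m < k"
    have e: "sum_list (take (k - m) (rev xs)) = sum_list (drop m xs)"
      using len m by (simp add: take_rev)
    have "sum_list (take (k-m) (rev xs)) < k - m" using B m by auto
    moreover have "sum_list (take m xs) + sum_list (drop m xs) + h = k" using sm sum_take_drop[of m xs] by simp
    ultimately show "m < sum_list (take m xs) + h" using e by linarith
  qed
qed

lemma RFP_sum: "(\<Sum>ns\<in>RFP h k. prodb ns) = (L_ser^h) $ k"
proof -
  have "(\<Sum>ns\<in>RFP h k. prodb ns) = (\<Sum>ns\<in>FP h k. prodb ns)"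
  proof (rule sum.reindex_bij_witness[where i=rev and j=rev])
    fix a assume "a \<in> RFP h k"
    thus "rev a \<in> FP h k" using rev_cond[of "rev a" k h] by (auto simp: RFP_def FP_def)
  next
    fix b assume "b \<in> FP h k"
    thus "rev b \<in> RFP h k" using rev_cond[of b k h] by (auto simp: RFP_def FP_def)
  qed auto
  thus ?thesis by (simp add: FP_sum)
qed

definition DN :: "nat \<Rightarrow> nat \<Rightarrow> nat list set" where
  "DN s l = {ns. length ns = l \<and> sum_list ns + s = l \<and> (\<forall>m<l. sum_list (drop m ns) + m \<le> l)}"

lemma DN_NN: "DN s l = NN s l"
proof -
  have "(\<forall>m<l. sum_list (drop m xs) + m \<le> l) \<longleftrightarrow> (\<forall>m\<le>l. m \<le> sum_list (take m xs) + s)"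
    if "length xs = l" "sum_list xs + s = l" for xs
  proof -
    have "sum_list (drop m xs) + m \<le> l \<longleftrightarrow> m \<le> sum_list (take m xs) + s" for m
      using sum_take_drop[of m xs] that by linarith
    moreover have "l \<le> sum_list (take l xs) + s" using that by simp
    ultimately show ?thesis using le_neq_implies_less less_imp_le by blast
  qed
  thus ?thesis unfolding DN_def NN_def by blast
qed

lemma phi_in:
  assumes "h \<le> k" "s \<le> l" "A \<in> RFP h k" "C \<in> DN s l"
  shows "A @ (h+s+1) # C \<in> S_set (Suc k) (Suc k + l)"
proof -
  have A1: "length A = k" and A2: "sum_list A + h = k"
    and A3: "\<And>j. 1 \<le> j \<Longrightarrow> j \<le> k \<Longrightarrow> sum_list (take j A) < j"
    using assms(3) unfolding RFP_def by blast+
  have C1: "length C = l" and C2: "sum_list C + s = l"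
    and C3: "\<And>m. m < l \<Longrightarrow> sum_list (drop m C) + m \<le> l"
    using assms(4) unfolding DN_def by blast+
  have pre: "sum_list (take j (A @ (h+s+1) # C)) < j" if "1 \<le> j" "j < Suc k" for j
  proof -
    have "take j (A @ (h+s+1) # C) = take j A" using that A1 by simp
    thus ?thesis using A3[of j] that by simp
  qed
  have suf: "sum_list (drop j (A @ (h+s+1) # C)) \<le> Suc k + l - j" if "Suc k \<le> j" "j < Suc k + l" for j
  proof -
    define m where "m = j - Suc k"
    have m: "j = Suc k + m" "m < l" using that by (auto simp: m_def)
    have "drop j (A @ (h+s+1) # C) = drop m C" using A1 m(1) by simp
    thus ?thesis using C3[OF m(2)] m(1) by simp
  qed
  have l1: "length (A @ (h+s+1) # C) = Suc k + l" using A1 C1 by simp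
  have l2: "sum_list (A @ (h+s+1) # C) = Suc k + l" using A2 C2 assms(1,2) by simp
  show ?thesis unfolding S_set_def mem_Collect_eq
    using l1 l2 pre suf by simp
qed

lemma psi_facts:
  assumes "ns \<in> S_set (Suc k) (Suc k + l)"
  defines "S1 \<equiv> sum_list (take k ns)" and "S2 \<equiv> sum_list (drop (Suc k) ns)"
  shows "S1 \<le> k" "S2 \<le> l" "ns = take k ns @ ((k - S1) + (l - S2) + 1) # drop (Suc k) ns"
    "take k ns \<in> RFP (k - S1) k" "drop (Suc k) ns \<in> DN (l - S2) l"
proof -
  have len: "length ns = Suc k + l" and sm: "sum_list ns = Suc k + l"
    and pre: "\<And>j. 1 \<le> j \<Longrightarrow> j < Suc k \<Longrightarrow> sum_list (take j ns) < j"
    and suf: "\<And>j. Suc k \<le> j \<Longrightarrow> j < Suc k + l \<Longrightarrow> sum_list (drop j ns) \<le> Suc k + l - j"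
    using assms(1) unfolding S_set_def mem_Collect_eq by blast+
  show s1: "S1 \<le> k"
  proof (cases "k = 0")
    case True thus ?thesis by (simp add: S1_def)
  next
    case False thus ?thesis using pre[of k] by (simp add: S1_def)
  qed
  show s2: "S2 \<le> l"
  proof (cases "l = 0")
    case True thus ?thesis using len by (simp add: S2_def)
  next
    case False thus ?thesis using suf[of "Suc k"] by (simp add: S2_def)
  qed
  have split: "ns = take k ns @ ns ! k # drop (Suc k) ns"
    using len by (simp add: id_take_nth_drop)
  hence "sum_list ns = S1 + ns ! k + S2" unfolding S1_def S2_def
    by (metis add.assoc sum_list.Cons sum_list_append)
  hence "ns ! k = (k - S1) + (l - S2) + 1" using sm s1 s2 by linarith
  thus "ns = take k ns @ ((k - S1) + (l - S2) + 1) # drop (Suc k) ns" using split by simp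
  have "sum_list (take k ns) + (k - S1) = k" using s1 by (simp add: S1_def)
  moreover have "sum_list (take j (take k ns)) < j" if "1 \<le> j" "j \<le> k" for j
    using pre[of j] that by (simp add: min_def)
  ultimately show "take k ns \<in> RFP (k - S1) k" using len unfolding RFP_def mem_Collect_eq by simp
  have "sum_list (drop (Suc k) ns) + (l - S2) = l" using s2 by (simp add: S2_def)
  moreover have "sum_list (drop m (drop (Suc k) ns)) + m \<le> l" if "m < l" for m
    using suf[of "Suc k + m"] that by (simp add: add.commute)
  ultimately show "drop (Suc k) ns \<in> DN (l - S2) l" using len unfolding DN_def mem_Collect_eq by simp
qed

lemma finite_RFP: "finite (RFP h k)"
  by (rule finite_subset[OF _ finite_bounded_lists[of k k]]) (auto simp: RFP_def)

lemma finite_DN: "finite (DN h k)"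
  by (rule finite_subset[OF _ finite_bounded_lists[of k k]]) (auto simp: DN_def)

lemma S_decomp:
  "(\<Sum>ns\<in>S_set (Suc k) (Suc k + l). prodb ns) =
   (\<Sum>h\<le>k. \<Sum>s\<le>l. (L_ser^h) $ k * bern_egf $ (h+s+1) * (L_ser^(s+1)) $ (l+1))"
proof -
  define T where "T = Sigma ({..k} \<times> {..l}) (\<lambda>(h,s). RFP h k \<times> DN s l)"
  define phi :: "(nat \<times> nat) \<times> nat list \<times> nat list \<Rightarrow> nat list"
    where "phi = (\<lambda>((h,s),(A,C)). A @ (h+s+1) # C)"
  define psi where "psi = (\<lambda>ns::nat list. ((k - sum_list (take k ns), l - sum_list (drop (Suc k) ns)),
      (take k ns, drop (Suc k) ns)))"
  define g :: "(nat \<times> nat) \<times> nat list \<times> nat list \<Rightarrow> rat poly"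
    where "g = (\<lambda>((h,s),(A,C)). prodb A * (bern_egf $ (h+s+1) * prodb C))"
  have "(\<Sum>ns\<in>S_set (Suc k) (Suc k + l). prodb ns) = sum g T"
  proof (rule sum.reindex_bij_witness[where i=phi and j=psi])
    fix ns assume ns: "ns \<in> S_set (Suc k) (Suc k + l)"
    note P = psi_facts[OF ns]
    show "phi (psi ns) = ns" unfolding phi_def psi_def using P(3) by simp
    show "psi ns \<in> T" unfolding psi_def T_def using P(1,2,4,5) by simp
    show "g (psi ns) = prodb ns" unfolding g_def psi_def
      by (subst (3) P(3)) simp
  next
    fix b assume b: "b \<in> T"
    then obtain h s A C where bb: "b = ((h,s),(A,C))" and hs: "h \<le> k" "s \<le> l"
      and AC: "A \<in> RFP h k" "C \<in> DN s l" unfolding T_def by auto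
    have A1: "length A = k" and A2: "sum_list A + h = k" using AC(1) unfolding RFP_def by blast+
    have C1: "length C = l" and C2: "sum_list C + s = l" using AC(2) unfolding DN_def by blast+
    show "phi b \<in> S_set (Suc k) (Suc k + l)" unfolding bb phi_def using phi_in[OF hs AC] by simp
    have "k - sum_list A = h" "l - sum_list C = s" using A2 C2 by linarith+
    thus "psi (phi b) = b" unfolding bb phi_def psi_def using A1 C1 by simp
  qed
  also have "\<dots> = (\<Sum>(h,s)\<in>{..k} \<times> {..l}. \<Sum>(A,C)\<in>RFP h k \<times> DN s l. g ((h,s),(A,C)))"
    unfolding T_def by (simp add: sum.Sigma finite_RFP finite_DN split_def)
  also have "\<dots> = (\<Sum>(h,s)\<in>{..k} \<times> {..l}. (L_ser^h) $ k * bern_egf $ (h+s+1) * (L_ser^(s+1)) $ (l+1))"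
  proof (rule sum.cong[OF refl], clarify)
    fix h s
    have "(\<Sum>(A,C)\<in>RFP h k \<times> DN s l. g ((h,s),(A,C))) =
        (\<Sum>A\<in>RFP h k. \<Sum>C\<in>DN s l. prodb A * (bern_egf $ (h+s+1) * prodb C))"
      unfolding g_def sum.cartesian_product by simp
    also have "\<dots> = (\<Sum>A\<in>RFP h k. prodb A) * (bern_egf $ (h+s+1) * (\<Sum>C\<in>DN s l. prodb C))"
      by (simp only: sum_distrib_left[of "bern_egf $ (h+s+1)"] sum_product)
    also have "\<dots> = (L_ser^h) $ k * bern_egf $ (h+s+1) * (L_ser^(s+1)) $ (l+1)"
      by (simp add: RFP_sum DN_NN NN_sum mult.assoc)
    finally show "(\<Sum>(A,C)\<in>RFP h k \<times> DN s l. g ((h,s),(A,C))) = (L_ser^h) $ k * bern_egf $ (h+s+1) * (L_ser^(s+1)) $ (l+1)" .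
  qed
  also have "\<dots> = (\<Sum>h\<le>k. \<Sum>s\<le>l. (L_ser^h) $ k * bern_egf $ (h+s+1) * (L_ser^(s+1)) $ (l+1))"
    by (simp add: sum.cartesian_product)
  finally show ?thesis .
qed

definition ell :: "rat poly fps" where "ell = Abs_fps (\<lambda>n. (-1)^n * L_ser $ n)"

lemma ell_comp: "ell = L_ser oo (- fps_X)"
  by (simp add: ell_def fps_compose_uminus')

lemma mX0: "(- fps_X :: rat poly fps) $ 0 = 0" by simp

lemma ell0: "ell $ 0 = 0" by (simp add: ell_def L0)

lemma ell_pow_nth: "(ell ^ h) $ n = (-1)^n * (L_ser ^ h) $ n"
proof -
  have "ell ^ h = L_ser ^ h oo (- fps_X)"
    by (simp add: ell_comp fps_compose_power[OF mX0])
  thus ?thesis by (simp add: fps_compose_uminus')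
qed

lemma ell_pow_zero: "n < h \<Longrightarrow> (ell ^ h) $ n = 0"
  by (simp add: ell_pow_nth Lpow_zero)

lemma ell_b: "fps_X * (bern_egf oo ell) = - ell"
proof -
  have "(fps_X * (bern_egf oo L_ser)) oo (- fps_X) = L_ser oo (- fps_X)" by (simp add: XbL)
  hence "(fps_X oo (- fps_X)) * ((bern_egf oo L_ser) oo (- fps_X)) = ell"
    by (simp add: fps_compose_mult_distrib[OF mX0] ell_comp)
  moreover have "(bern_egf oo L_ser) oo (- fps_X) = bern_egf oo ell"
    unfolding ell_comp by (rule fps_compose_assoc[symmetric]) (simp_all add: L0)
  ultimately have "- (fps_X * (bern_egf oo ell)) = ell" by (simp add: fps_X_fps_compose_startby0)
  thus ?thesis by (metis minus_minus)
qed

definition sb :: "nat \<Rightarrow> rat poly fps" where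
  "sb h = Abs_fps (\<lambda>j. if j = 0 then 0 else bern_egf $ (h + j))"

definition kap :: "nat \<Rightarrow> rat poly fps" where "kap h = sb h oo ell"

lemma sb_rel: "fps_X * sb (Suc h) = sb h - fps_const (bern_egf $ Suc h) * fps_X"
  by (rule fps_ext) (auto simp: sb_def le_Suc_eq)

lemma sb_0: "sb 0 = bern_egf - 1"
  by (rule fps_ext) (auto simp: sb_def bern0)

lemma kap_rel: "ell * kap (Suc h) = kap h - fps_const (bern_egf $ Suc h) * ell"
proof -
  have "(fps_X * sb (Suc h)) oo ell = (sb h - fps_const (bern_egf $ Suc h) * fps_X) oo ell"
    by (simp add: sb_rel)
  thus ?thesis
    by (simp add: kap_def fps_compose_mult_distrib[OF ell0] fps_compose_sub_distrib ell0)
qed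

lemma kap_0: "kap 0 = (bern_egf oo ell) - 1"
  by (simp add: kap_def sb_0 fps_compose_sub_distrib)

lemma kap_nth: "kap h $ Suc n = (\<Sum>s\<le>n. bern_egf $ (h + s + 1) * (ell ^ (s+1)) $ Suc n)"
proof -
  have "kap h $ Suc n = (\<Sum>j=0..Suc n. sb h $ j * (ell ^ j) $ Suc n)"
    by (simp add: kap_def fps_compose_nth)
  also have "\<dots> = (\<Sum>j\<le>n. sb h $ Suc j * (ell ^ Suc j) $ Suc n)"
    by (simp only: atLeast0AtMost sum.atMost_Suc_shift) (simp add: sb_def)
  also have "\<dots> = (\<Sum>s\<le>n. bern_egf $ (h + s + 1) * (ell ^ (s+1)) $ Suc n)"
    by (simp add: sb_def)
  finally show ?thesis .
qed

definition emb :: "rat poly fps \<Rightarrow> rat poly fps fps" where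
  "emb f = Abs_fps (\<lambda>m. fps_const (f $ m))"

lemma emb_nth[simp]: "emb f $ m = fps_const (f $ m)" by (simp add: emb_def)

lemma fps_const_sum: "fps_const (sum f A) = (\<Sum>a\<in>A. fps_const (f a))"
  by (induct A rule: infinite_finite_induct) (simp_all flip: fps_const_add)

lemma emb_0[simp]: "emb 0 = 0" by (rule fps_ext) simp

lemma emb_add: "emb (f + g) = emb f + emb g" by (rule fps_ext) simp
lemma emb_diff: "emb (f - g) = emb f - emb g" by (rule fps_ext) simp
lemma emb_mult: "emb (f * g) = emb f * emb g"
  by (rule fps_ext) (simp add: fps_mult_nth fps_const_sum)
lemma emb_uminus: "emb (- f) = - emb f" by (rule fps_ext) simp
lemma emb_1: "emb 1 = 1" by (rule fps_ext) simp
lemma emb_const: "emb (fps_const c) = fps_const (fps_const c)" by (rule fps_ext) simp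
lemma emb_X: "emb fps_X = fps_X" by (rule fps_ext) (simp add: fps_X_def)
lemma emb_power: "emb (f ^ n) = emb f ^ n"
  by (induct n) (simp_all add: emb_1 emb_mult)
lemma emb_sum: "emb (sum f A) = (\<Sum>a\<in>A. emb (f a))"
  by (induct A rule: infinite_finite_induct) (simp_all add: emb_add)

lemma Lmx_emb: "Lmx = emb ell" by (simp add: Lmx_def emb_def ell_def)
lemma Lmy_const: "Lmy = fps_const ell" by (simp add: Lmy_def ell_def)

definition KN :: "nat \<Rightarrow> rat poly fps fps" where
  "KN N = (\<Sum>h\<le>N. emb (ell ^ h) * fps_const (kap h))"

definition SN :: "nat \<Rightarrow> rat poly fps" where
  "SN N = (\<Sum>h<N. fps_const (bern_egf $ Suc h) * ell ^ Suc h)"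

lemma KN_tele:
  "KN N * (fps_const ell - emb ell) =
     fps_const (ell * kap 0) - emb (ell ^ Suc N) * fps_const (kap N) - fps_const ell * emb (SN N)"
proof (induction N)
  case 0
  show ?case by (simp add: KN_def SN_def emb_1 algebra_simps)
next
  case (Suc N)
  define c :: "rat poly fps fps" where "c = fps_const (fps_const (bern_egf $ Suc N))"
  have k: "fps_const (ell * kap (Suc N)) = fps_const (kap N) - c * fps_const ell"
    by (simp add: kap_rel c_def)
  have e: "emb (ell ^ Suc (Suc N)) = emb (ell ^ Suc N) * emb ell"
    by (simp add: emb_mult flip: power_Suc2)
  have sn: "emb (SN (Suc N)) = emb (SN N) + c * emb (ell ^ Suc N)"
    by (simp add: SN_def emb_add emb_mult emb_const c_def)
  have "KN (Suc N) * (fps_const ell - emb ell) = KN N * (fps_const ell - emb ell)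
     + emb (ell ^ Suc N) * (fps_const ell * fps_const (kap (Suc N))) - emb (ell ^ Suc N) * emb ell * fps_const (kap (Suc N))"
    by (simp add: KN_def algebra_simps)
  also have "\<dots> = KN N * (fps_const ell - emb ell)
     + emb (ell ^ Suc N) * fps_const (kap N) - emb (ell ^ Suc N) * c * fps_const ell - emb (ell ^ Suc (Suc N)) * fps_const (kap (Suc N))"
    by (simp only: fps_const_mult k e) (simp add: algebra_simps)
  also have "\<dots> = fps_const (ell * kap 0) - emb (ell ^ Suc (Suc N)) * fps_const (kap (Suc N)) - fps_const ell * emb (SN (Suc N))"
    by (simp only: Suc.IH sn) (simp add: algebra_simps)
  finally show ?case .
qed

lemma KN_nth: "KN N $ j = (\<Sum>h\<le>N. fps_const ((ell ^ h) $ j) * kap h)"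
  by (simp add: KN_def fps_sum_nth)

lemma KN_stable: "j \<le> N \<Longrightarrow> KN N $ j = KN j $ j"
  unfolding KN_nth
  by (rule sum.mono_neutral_right) (auto simp: ell_pow_zero)

definition K :: "rat poly fps fps" where "K = Abs_fps (\<lambda>m. KN m $ m)"

lemma K_nth: "K $ j = KN j $ j" by (simp add: K_def)

lemma mult_agree:
  assumes "\<And>j. j \<le> m \<Longrightarrow> f $ j = g $ j"
  shows "(f * h) $ m = (g * h) $ m"
  using assms by (simp add: fps_mult_nth)

definition W :: "nat \<Rightarrow> rat poly fps fps" where
  "W N = fps_const ell * emb ((bern_egf oo ell) - 1 - SN N) - emb (ell ^ Suc N) * fps_const (kap N)"

lemma R_zero:
  assumes "j \<le> N"
  shows "((bern_egf oo ell) - 1 - SN N) $ j = 0"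
proof -
  have "(bern_egf oo ell) $ j = (\<Sum>i=0..j. bern_egf $ i * (ell ^ i) $ j)" by (simp add: fps_compose_nth)
  also have "\<dots> = (\<Sum>i<Suc N. bern_egf $ i * (ell ^ i) $ j)"
    using assms by (intro sum.mono_neutral_left) (auto simp: ell_pow_zero)
  also have "\<dots> = bern_egf $ 0 * (ell ^ 0) $ j + (\<Sum>i<N. bern_egf $ Suc i * (ell ^ Suc i) $ j)"
    by (rule sum.lessThan_Suc_shift)
  also have "\<dots> = (1 :: rat poly fps) $ j + SN N $ j"
    by (simp add: bern0 SN_def fps_sum_nth)
  finally show ?thesis by simp
qed

lemma W_nth_zero:
  assumes "j \<le> N" shows "W N $ j = 0"
  unfolding W_def fps_sub_nth fps_mult_left_const_nth fps_mult_right_const_nth emb_nth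
  using R_zero[OF assms] ell_pow_zero[of j "Suc N"] assms by simp

definition GN :: "nat \<Rightarrow> rat poly fps fps" where
  "GN N = fps_X * fps_const fps_X * KN N - fps_const fps_X * emb ell"

lemma cP: "fps_const fps_X * fps_const (bern_egf oo ell) = - fps_const ell"
  using ell_b by (simp flip: fps_const_neg)

lemma EQ: "emb ell = - fps_X * emb (bern_egf oo ell)"
proof -
  have "emb ell = emb (- (fps_X * (bern_egf oo ell)))" by (simp add: ell_b)
  also have "\<dots> = - fps_X * emb (bern_egf oo ell)"
    by (simp add: emb_mult emb_X emb_uminus)
  finally show ?thesis .
qed

lemma GN_eq:
  "GN N * (fps_const ell - emb ell) =
    fps_const fps_X * emb ell ^ 2 - fps_X * fps_const ell ^ 2 + fps_X * fps_const fps_X * W N"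
proof -
  define c :: "rat poly fps fps" where "c = fps_const fps_X"
  define Y :: "rat poly fps fps" where "Y = fps_const ell"
  define E where "E = emb ell"
  define P :: "rat poly fps fps" where "P = fps_const (bern_egf oo ell)"
  define Q where "Q = emb (bern_egf oo ell)"
  define A where "A = emb (ell ^ Suc N) * fps_const (kap N)"
  define S where "S = emb (SN N)"
  have cP': "c * P = - Y" using cP by (simp add: c_def P_def Y_def)
  have EQ': "E = - fps_X * Q" using EQ by (simp add: E_def Q_def)
  have k0: "fps_const (ell * kap 0) = Y * P - Y"
    by (simp add: kap_0 Y_def P_def algebra_simps)
  have WW: "W N = Y * (Q - 1 - S) - A"
    by (simp add: W_def Y_def Q_def S_def A_def emb_diff emb_1)
  have T: "KN N * (Y - E) = Y * P - Y - A - Y * S"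
    using KN_tele[of N] unfolding k0 unfolding Y_def E_def A_def S_def .
  have "GN N * (fps_const ell - emb ell) = fps_X * c * (KN N * (Y - E)) - c * E * (Y - E)"
    by (simp add: GN_def c_def Y_def E_def algebra_simps)
  also have "\<dots> = fps_X * c * (Y * P - Y - A - Y * S) - c * E * (Y - E)"
    by (simp only: T)
  also have "\<dots> = c * E ^ 2 - fps_X * Y ^ 2 + fps_X * c * W N
      + fps_X * Y * (c * P + Y) - c * Y * (E + fps_X * Q)"
    by (simp add: WW power2_eq_square algebra_simps)
  also have "\<dots> = c * E ^ 2 - fps_X * Y ^ 2 + fps_X * c * W N"
    by (simp add: cP' EQ')
  finally show ?thesis by (simp add: c_def Y_def E_def)
qed

definition G0 :: "rat poly fps fps" where
  "G0 = fps_X * fps_const fps_X * K - fps_const fps_X * emb ell"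

lemma G0_GN: "j \<le> N \<Longrightarrow> G0 $ j = GN N $ j"
proof -
  assume j: "j \<le> N"
  have "G0 - GN N = fps_X * (fps_const fps_X * (K - KN N))"
    by (simp add: G0_def GN_def algebra_simps)
  moreover have "(fps_X * (fps_const fps_X * (K - KN N))) $ j = 0"
  proof -
    have z: "(K - KN N) $ i = 0" if "i \<le> N" for i
      unfolding fps_sub_nth K_nth using KN_stable[OF that] by simp
    show ?thesis using j z[of "j - 1"] by simp
  qed
  ultimately have "(G0 - GN N) $ j = 0" by simp
  thus ?thesis by simp
qed

lemma G0_eq: "G0 * (- Lmx + Lmy) = yv * Lmx ^ 2 - xv * Lmy ^ 2"
proof (rule fps_ext)
  fix m
  have D: "- Lmx + Lmy = fps_const ell - emb ell" by (simp add: Lmx_emb Lmy_const)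
  have "(G0 * (- Lmx + Lmy)) $ m = (GN m * (fps_const ell - emb ell)) $ m"
    unfolding D by (rule mult_agree) (simp add: G0_GN)
  also have "\<dots> = (fps_const fps_X * emb ell ^ 2 - fps_X * fps_const ell ^ 2) $ m
       + (fps_X * (fps_const fps_X * W m)) $ m"
    by (simp only: GN_eq fps_add_nth mult.assoc)
  also have "(fps_X * (fps_const fps_X * W m)) $ m = 0"
    by (simp add: W_nth_zero)
  finally show "(G0 * (- Lmx + Lmy)) $ m = (yv * Lmx ^ 2 - xv * Lmy ^ 2) $ m"
    by (simp add: xv_def yv_def Lmx_emb Lmy_const)
qed

lemma ell1: "ell $ 1 = -1"
  using L1 by (simp add: ell_def)

lemma D_nz: "- Lmx + Lmy \<noteq> 0"
proof
  assume "- Lmx + Lmy = 0"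
  hence "(- Lmx + Lmy) $ 0 $ 1 = 0" by simp
  thus False using ell1 by (simp add: Lmx_emb Lmy_const ell0)
qed

lemma G_gen_eq: "G_gen = G0"
proof -
  have "\<exists>!H. H * (- Lmx + Lmy) = yv * Lmx ^ 2 - xv * Lmy ^ 2"
  proof
    show "G0 * (- Lmx + Lmy) = yv * Lmx ^ 2 - xv * Lmy ^ 2" by (rule G0_eq)
  next
    fix H assume "H * (- Lmx + Lmy) = yv * Lmx ^ 2 - xv * Lmy ^ 2"
    hence "H * (- Lmx + Lmy) = G0 * (- Lmx + Lmy)" using G0_eq by simp
    thus "H = G0" using D_nz by (metis mult_right_cancel)
  qed
  hence "G_gen * (- Lmx + Lmy) = yv * Lmx ^ 2 - xv * Lmy ^ 2"
    unfolding G_gen_def by (rule theI')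
  hence "G_gen * (- Lmx + Lmy) = G0 * (- Lmx + Lmy)" using G0_eq by simp
  thus ?thesis using D_nz by (metis mult_right_cancel)
qed

lemma G_coeff:
  "G_poly (Suc k) (Suc (Suc l)) =
    (\<Sum>h\<le>k. (ell ^ h) $ k * (\<Sum>s\<le>l. bern_egf $ (h + s + 1) * (ell ^ (s+1)) $ Suc l))"
proof -
  have "G0 $ Suc k = fps_X * K $ k - fps_X * fps_const (ell $ Suc k)"
    by (simp add: G0_def mult.assoc)
  hence "G0 $ Suc k $ Suc (Suc l) = K $ k $ Suc l"
    by simp
  also have "\<dots> = (\<Sum>h\<le>k. (ell ^ h) $ k * kap h $ Suc l)"
    by (simp add: K_nth KN_nth fps_sum_nth)
  finally show ?thesis by (simp add: G_poly_def G_gen_eq kap_nth)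
qed

lemma bc: "smult (1 / fact n) (bernpoly n) = bern_egf $ n"
  by (simp add: bernpoly_def of_nat_poly)

lemma C_prodb: "C_poly i r = (-1) ^ r * (\<Sum>ns\<in>S_set i r. prodb ns)"
proof -
  have "(\<lambda>n. smult (1 / fact n) (bernpoly n)) = (\<lambda>n. bern_egf $ n)" by (rule ext) (rule bc)
  thus ?thesis by (simp add: C_poly_def prodb_def)
qed

theorem theorem6p4:
  fixes i r :: nat
  assumes "1 \<le> i" and "i \<le> r"
  shows "C_poly i r = G_poly i (r - i + 2)"
proof -
  obtain k where k: "i = Suc k" using assms(1) by (cases i) auto
  obtain l where l: "r = Suc k + l" using assms(2) k le_Suc_ex by blast
  have r2: "r - i + 2 = Suc (Suc l)" using k l by simp
  have "C_poly i r = (-1) ^ (Suc k + l) *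
     (\<Sum>h\<le>k. \<Sum>s\<le>l. (L_ser^h) $ k * bern_egf $ (h+s+1) * (L_ser^(s+1)) $ (l+1))"
    unfolding C_prodb k l S_decomp by (rule refl)
  also have "\<dots> = (\<Sum>h\<le>k. (ell ^ h) $ k * (\<Sum>s\<le>l. bern_egf $ (h + s + 1) * (ell ^ (s+1)) $ Suc l))"
  proof -
    have sg: "(-1::rat poly) ^ Suc (k + l) = (-1) ^ k * (-1) ^ Suc l"
      by (simp add: power_add[symmetric])
    show ?thesis
      by (simp add: ell_pow_nth sum_distrib_left del: power_Suc) (intro sum.cong refl, simp add: sg mult_ac del: power_Suc)
  qed
  also have "\<dots> = G_poly i (r - i + 2)" by (simp add: r2 k l G_coeff)
  finally show ?thesis .
qed

end
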